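(* Let $\mathcal V$ be a congruence modular variety, $\mathbb A\in\mathcal V$, $k\neq l\in\mathbb N$, and let $R\le\mathbb A^{2^{\{k,l\}}}$ be a $(2)$-dimensional tolerance of $\mathbb A$. If $\mathrm{face}_k^0(R)$ (viewed as a binary relation on $A$) is a congruence of $\mathbb A$ and $\mathrm{face}_k(R)$ is a congruence of the algebra $\mathrm{face}_k^0(R)$ (a subalgebra of $\mathbb A^2$), then $R$ is a $(2)$-dimensional congruence of $\mathbb A$.
   Context: Cube notation. $2=\{0,1\}$; for finite $S\subseteq\mathbb N$, $2^S$ is the set of functions $S\to 2$ and an $(S)$-cube over $A$ is $\gamma=(\gamma_f)_{f\in2^S}\in A^{2^S}$. For $i\in S$, $j\in 2$: $\mathrm{face}_i^j(\gamma)\in A^{2^{S\setminus\{i\}}}$ is $g\mapsto\gamma_{g\cup\{(i,j)\}}$; $\mathrm{glue}_{\{i\}}(\zeta,\eta)$ is the unique cube with $\mathrm{face}_i^0=\zeta$, $\mathrm{face}_i^1=\eta$; $\mathrm{refl}_i^j(\gamma)=\mathrm{glue}_{\{i\}}(\mathrm{face}_i^j\gamma,\mathrm{face}_i^j\gamma)$; $\mathrm{sym}_i(\gamma)=\mathrm{glue}_{\{i\}}(\mathrm{face}_i^1\gamma,\mathrm{face}_i^0\gamma)$. For $R\subseteq A^{2^S}$, $\mathrm{face}_i^j(R)=\{\mathrm{face}_i^j(\gamma):\gamma\in R\}$ and $\mathrm{face}_i(R)=\{(\mathrm{face}_i^0\gamma,\mathrm{face}_i^1\gamma):\gamma\in R\}$.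 A $(\{l\})$-cube $\zeta$ is identified with the pair $(\zeta_{\{(l,0)\}},\zeta_{\{(l,1)\}})$. With $|S|=n$: a subuniverse $R$ of $\mathbb A^{2^S}$ is an $(n)$-dimensional tolerance of $\mathbb A$ if $\mathrm{refl}_i^j(\gamma),\mathrm{sym}_i(\gamma)\in R$ for all $\gamma\in R$, $i\in S$, $j\in 2$; it is an $(n)$-dimensional congruence if moreover $\mathrm{face}_i(R)$ is a transitive relation for every $i\in S$. *)

theory Defs
  imports "HOL-Library.FuncSet"
begin

text \<open>Operations take argument lists; only lists of
  length arity f with entries in the carrier are meaningful.\<close>

record ('a, 'f) alg =
  carrier :: "'a set"
  ops :: "'f \<Rightarrow> 'a list \<Rightarrow> 'a"

definition is_alg :: "('f \<Rightarrow> nat) \<Rightarrow> ('a, 'f) alg \<Rightarrow> bool" where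
  "is_alg ar B \<longleftrightarrow> (\<forall>f xs. length xs = ar f \<and> set xs \<subseteq> carrier B \<longrightarrow> ops B f xs \<in> carrier B)"

definition subuniverse :: "('f \<Rightarrow> nat) \<Rightarrow> ('a, 'f) alg \<Rightarrow> 'a set \<Rightarrow> bool" where
  "subuniverse ar B X \<longleftrightarrow> X \<subseteq> carrier B \<and>
     (\<forall>f xs. length xs = ar f \<and> set xs \<subseteq> X \<longrightarrow> ops B f xs \<in> X)"

definition is_congruence :: "('f \<Rightarrow> nat) \<Rightarrow> ('a, 'f) alg \<Rightarrow> 'a rel \<Rightarrow> bool" where
  "is_congruence ar B \<theta> \<longleftrightarrow> equiv (carrier B) \<theta> \<and>
     (\<forall>f xs ys. length xs = ar f \<and> length ys = ar f \<and> list_all2 (\<lambda>x y. (x, y) \<in> \<theta>) xs ys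
        \<longrightarrow> (ops B f xs, ops B f ys) \<in> \<theta>)"

definition Con :: "('f \<Rightarrow> nat) \<Rightarrow> ('a, 'f) alg \<Rightarrow> 'a rel set" where
  "Con ar B = {\<theta>. is_congruence ar B \<theta>}"

definition con_join :: "('f \<Rightarrow> nat) \<Rightarrow> ('a, 'f) alg \<Rightarrow> 'a rel \<Rightarrow> 'a rel \<Rightarrow> 'a rel" where
  "con_join ar B \<alpha> \<beta> = \<Inter>{\<theta> \<in> Con ar B. \<alpha> \<union> \<beta> \<subseteq> \<theta>}"

definition con_modular :: "('f \<Rightarrow> nat) \<Rightarrow> ('a, 'f) alg \<Rightarrow> bool" where
  "con_modular ar B \<longleftrightarrow> (\<forall>\<alpha>\<in>Con ar B. \<forall>\<beta>\<in>Con ar B. \<forall>\<gamma>\<in>Con ar B.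
      \<alpha> \<subseteq> \<gamma> \<longrightarrow> con_join ar B \<alpha> (\<beta> \<inter> \<gamma>) = con_join ar B \<alpha> \<beta> \<inter> \<gamma>)"

datatype ('f, 'v) trm = Var 'v | App 'f "('f, 'v) trm list"

fun wf_trm :: "('f \<Rightarrow> nat) \<Rightarrow> ('f, 'v) trm \<Rightarrow> bool" where
  "wf_trm ar (Var x) = True"
| "wf_trm ar (App f ts) = (length ts = ar f \<and> (\<forall>t\<in>set ts. wf_trm ar t))"

fun eval :: "('a, 'f) alg \<Rightarrow> ('v \<Rightarrow> 'a) \<Rightarrow> ('f, 'v) trm \<Rightarrow> 'a" where
  "eval B \<sigma> (Var x) = \<sigma> x"
| "eval B \<sigma> (App f ts) = ops B f (map (eval B \<sigma>) ts)"

definition wf_identities :: "('f \<Rightarrow> nat) \<Rightarrow> (('f, nat) trm \<times> ('f, nat) trm) set \<Rightarrow> bool" where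
  "wf_identities ar \<Sigma> \<longleftrightarrow> (\<forall>(s, t)\<in>\<Sigma>. wf_trm ar s \<and> wf_trm ar t)"

definition models :: "('a, 'f) alg \<Rightarrow> (('f, nat) trm \<times> ('f, nat) trm) set \<Rightarrow> bool" where
  "models B \<Sigma> \<longleftrightarrow> (\<forall>(s, t)\<in>\<Sigma>. \<forall>\<sigma>. (\<forall>x. \<sigma> x \<in> carrier B) \<longrightarrow> eval B \<sigma> s = eval B \<sigma> t)"

definition in_variety :: "('f \<Rightarrow> nat) \<Rightarrow> (('f, nat) trm \<times> ('f, nat) trm) set \<Rightarrow> ('a, 'f) alg \<Rightarrow> bool" where
  "in_variety ar \<Sigma> B \<longleftrightarrow> is_alg ar B \<and> models B \<Sigma>"

text \<open>Congruence modularity of V = Mod(Sigma), as witnessed by the members of V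
  whose carrier lives in the type ((nat => 'a) => 'a) set. This type is large
  enough to contain (isomorphic copies of) all algebras in HSP of an algebra
  with universe in 'a of the size relevant here (e.g. finitely generated free
  algebras of the variety generated by such an algebra).\<close>

definition cm_variety :: "('f \<Rightarrow> nat) \<Rightarrow> (('f, nat) trm \<times> ('f, nat) trm) set \<Rightarrow> 'a itself \<Rightarrow> bool" where
  "cm_variety ar \<Sigma> _ \<longleftrightarrow> wf_identities ar \<Sigma> \<and>
     (\<forall>B :: (((nat \<Rightarrow> 'a) \<Rightarrow> 'a) set, 'f) alg. in_variety ar \<Sigma> B \<longrightarrow> con_modular ar B)"

text \<open>A function f : S -> 2 is represented by the subset of S on which it is 1.
  So 2^S corresponds to Pow S, and an (S)-cube over A is an element of
  Pow S ->E A (extensional functions).\<close>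

definition cubes :: "nat set \<Rightarrow> 'a set \<Rightarrow> (nat set \<Rightarrow> 'a) set" where
  "cubes S A = (Pow S \<rightarrow>\<^sub>E A)"

definition cube_alg :: "nat set \<Rightarrow> ('a, 'f) alg \<Rightarrow> (nat set \<Rightarrow> 'a, 'f) alg" where
  "cube_alg S B = \<lparr> carrier = cubes S (carrier B),
      ops = (\<lambda>f xs. \<lambda>v\<in>Pow S. ops B f (map (\<lambda>x. x v) xs)) \<rparr>"

text \<open>face_i^j (j = True means 1).\<close>

definition face :: "nat set \<Rightarrow> nat \<Rightarrow> bool \<Rightarrow> (nat set \<Rightarrow> 'a) \<Rightarrow> (nat set \<Rightarrow> 'a)" where
  "face S i j \<gamma> = (\<lambda>g\<in>Pow (S - {i}). \<gamma> (if j then insert i g else g))"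

definition glue :: "nat set \<Rightarrow> nat \<Rightarrow> (nat set \<Rightarrow> 'a) \<Rightarrow> (nat set \<Rightarrow> 'a) \<Rightarrow> (nat set \<Rightarrow> 'a)" where
  "glue S i \<zeta> \<eta> = (\<lambda>f\<in>Pow S. if i \<in> f then \<eta> (f - {i}) else \<zeta> f)"

definition refl_cube :: "nat set \<Rightarrow> nat \<Rightarrow> bool \<Rightarrow> (nat set \<Rightarrow> 'a) \<Rightarrow> (nat set \<Rightarrow> 'a)" where
  "refl_cube S i j \<gamma> = glue S i (face S i j \<gamma>) (face S i j \<gamma>)"

definition sym_cube :: "nat set \<Rightarrow> nat \<Rightarrow> (nat set \<Rightarrow> 'a) \<Rightarrow> (nat set \<Rightarrow> 'a)" where
  "sym_cube S i \<gamma> = glue S i (face S i True \<gamma>) (face S i False \<gamma>)"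

definition face_set :: "nat set \<Rightarrow> nat \<Rightarrow> bool \<Rightarrow> (nat set \<Rightarrow> 'a) set \<Rightarrow> (nat set \<Rightarrow> 'a) set" where
  "face_set S i j R = face S i j ` R"

definition face_rel :: "nat set \<Rightarrow> nat \<Rightarrow> (nat set \<Rightarrow> 'a) set \<Rightarrow> (nat set \<Rightarrow> 'a) rel" where
  "face_rel S i R = {(face S i False \<gamma>, face S i True \<gamma>) | \<gamma>. \<gamma> \<in> R}"

text \<open>n-dimensional tolerances and congruences (n = card S).\<close>

definition cube_tolerance :: "('f \<Rightarrow> nat) \<Rightarrow> ('a, 'f) alg \<Rightarrow> nat set \<Rightarrow> (nat set \<Rightarrow> 'a) set \<Rightarrow> bool" where
  "cube_tolerance ar B S R \<longleftrightarrow> subuniverse ar (cube_alg S B) R \<and>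
     (\<forall>\<gamma>\<in>R. \<forall>i\<in>S. (\<forall>j. refl_cube S i j \<gamma> \<in> R) \<and> sym_cube S i \<gamma> \<in> R)"

definition cube_congruence :: "('f \<Rightarrow> nat) \<Rightarrow> ('a, 'f) alg \<Rightarrow> nat set \<Rightarrow> (nat set \<Rightarrow> 'a) set \<Rightarrow> bool" where
  "cube_congruence ar B S R \<longleftrightarrow> cube_tolerance ar B S R \<and> (\<forall>i\<in>S. trans (face_rel S i R))"

definition as_pairs :: "nat \<Rightarrow> (nat set \<Rightarrow> 'a) set \<Rightarrow> 'a rel" where
  "as_pairs l Z = {(\<zeta> {}, \<zeta> {l}) | \<zeta>. \<zeta> \<in> Z}"

definition cube_subalg :: "nat set \<Rightarrow> ('a, 'f) alg \<Rightarrow> (nat set \<Rightarrow> 'a) set \<Rightarrow> (nat set \<Rightarrow> 'a, 'f) alg" where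
  "cube_subalg S B X = (cube_alg S B)\<lparr> carrier := X \<rparr>"

end

theory Submission
  imports Defs
begin

definition prodalg :: "('a, 'f) alg \<Rightarrow> (nat \<Rightarrow> 'a) set \<Rightarrow> (nat \<Rightarrow> 'a, 'f) alg" where
  "prodalg A X = \<lparr> carrier = X, ops = (\<lambda>f xs. \<lambda>i. ops A f (map (\<lambda>x. x i) xs)) \<rparr>"

definition imgalg :: "('a \<Rightarrow> 'b) \<Rightarrow> ('a, 'f) alg \<Rightarrow> ('b, 'f) alg" where
  "imgalg e P = \<lparr> carrier = e ` carrier P, ops = (\<lambda>f xs. e (ops P f (map (inv e) xs))) \<rparr>"

lemma prodalg_simps[simp]: "carrier (prodalg A X) = X"
  "ops (prodalg A X) f xs = (\<lambda>i. ops A f (map (\<lambda>x. x i) xs))"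
  by (simp_all add: prodalg_def)

lemma imgalg_simps[simp]: "carrier (imgalg e P) = e ` carrier P"
  "ops (imgalg e P) f xs = e (ops P f (map (inv e) xs))"
  by (simp_all add: imgalg_def)

lemma models_intro:
  assumes "\<And>s t \<sigma>. (s, t) \<in> \<Sigma> \<Longrightarrow> \<forall>x. \<sigma> x \<in> carrier B \<Longrightarrow> eval B \<sigma> s = eval B \<sigma> t"
  shows "models B \<Sigma>"
  using assms by (auto simp: models_def)

lemma modelsD:
  assumes "models B \<Sigma>" "(s, t) \<in> \<Sigma>" "\<forall>x. \<sigma> x \<in> carrier B"
  shows "eval B \<sigma> s = eval B \<sigma> t"
  using assms unfolding models_def by fast

lemma eval_prodalg:
  fixes t :: "('f, 'v) trm" and A :: "('a, 'f) alg"
  shows "eval (prodalg A X) \<sigma> t = (\<lambda>i. eval A (\<lambda>v. \<sigma> v i) t)"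
proof (induction t)
  case (Var x) then show ?case by (simp add: prodalg_def)
next
  case (App f ts)
  then show ?case by (auto simp: comp_def cong: map_cong)
qed

lemma prodalg_variety:
  fixes A :: "('a, 'f) alg" and \<Sigma> :: "(('f, nat) trm \<times> ('f, nat) trm) set"
  assumes "in_variety ar \<Sigma> A"
    and clos: "\<And>f xs. length xs = ar f \<Longrightarrow> set xs \<subseteq> X \<Longrightarrow> (\<lambda>i. ops A f (map (\<lambda>x. x i) xs)) \<in> X"
    and sub: "\<And>t i. t \<in> X \<Longrightarrow> t i \<in> carrier A"
  shows "in_variety ar \<Sigma> (prodalg A X)"
  unfolding in_variety_def
proof
  show "is_alg ar (prodalg A X)" using clos by (auto simp: is_alg_def prodalg_def)
  show "models (prodalg A X) \<Sigma>"
  proof (rule models_intro)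
    fix s t and \<sigma> :: "nat \<Rightarrow> _" assume p: "(s, t) \<in> \<Sigma>" and s: "\<forall>x. \<sigma> x \<in> carrier (prodalg A X)"
    have "eval A (\<lambda>v. \<sigma> v i) s = eval A (\<lambda>v. \<sigma> v i) t" for i
    proof -
      have "models A \<Sigma>" using assms(1) by (simp add: in_variety_def)
      moreover have "\<forall>x. \<sigma> x i \<in> carrier A" using s sub by simp
      ultimately show ?thesis by (rule modelsD[OF _ p])
    qed
    then show "eval (prodalg A X) \<sigma> s = eval (prodalg A X) \<sigma> t"
      by (simp add: eval_prodalg)
  qed
qed

lemma eval_imgalg:
  assumes "inj e" "\<forall>x. \<sigma> x \<in> range e"
  shows "eval (imgalg e P) \<sigma> t = e (eval P (\<lambda>x. inv e (\<sigma> x)) t)"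
proof (induction t)
  case (Var x) then show ?case using assms by (auto simp: f_inv_into_f)
next
  case (App f ts)
  then show ?case using assms(1) by (auto simp: comp_def inv_f_f cong: map_cong)
qed

lemma imgalg_variety:
  assumes "inj e" "in_variety ar \<Sigma> P"
  shows "in_variety ar \<Sigma> (imgalg e P)"
  unfolding in_variety_def
proof
  show "is_alg ar (imgalg e P)"
    unfolding is_alg_def
  proof (intro allI impI)
    fix f xs assume h: "length xs = ar f \<and> set xs \<subseteq> carrier (imgalg e P)"
    have "set (map (inv e) xs) \<subseteq> carrier P" using h assms(1) by (auto simp: imgalg_def inv_f_f)
    then have "ops P f (map (inv e) xs) \<in> carrier P" using assms(2) h
      by (auto simp: in_variety_def is_alg_def)
    then show "ops (imgalg e P) f xs \<in> carrier (imgalg e P)" by (simp add: imgalg_def)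
  qed
  show "models (imgalg e P) \<Sigma>"
  proof (rule models_intro)
    fix s t and \<sigma> :: "nat \<Rightarrow> _" assume p: "(s, t) \<in> \<Sigma>" and s: "\<forall>x. \<sigma> x \<in> carrier (imgalg e P)"
    have r: "\<forall>x. \<sigma> x \<in> range e" using s by (auto simp: imgalg_def)
    have "\<forall>x. (\<lambda>x. inv e (\<sigma> x)) x \<in> carrier P" using s assms(1) unfolding imgalg_def
      by (metis alg.select_convs(1) imageE inv_f_f)
    then have "eval P (\<lambda>x. inv e (\<sigma> x)) s = eval P (\<lambda>x. inv e (\<sigma> x)) t"
      using assms(2) p by (intro modelsD) (simp_all add: in_variety_def)
    then show "eval (imgalg e P) \<sigma> s = eval (imgalg e P) \<sigma> t"
      by (simp add: eval_imgalg[OF assms(1) r])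
  qed
qed

lemma imgalg_cong:
  assumes "inj e" "is_congruence ar P \<rho>"
  shows "is_congruence ar (imgalg e P) (map_prod e e ` \<rho>)"
  unfolding is_congruence_def
proof
  have eq: "equiv (carrier P) \<rho>" using assms(2) by (simp add: is_congruence_def)
  have mem: "(e a, e b) \<in> map_prod e e ` \<rho> \<longleftrightarrow> (a, b) \<in> \<rho>" for a b
  proof
    assume "(e a, e b) \<in> map_prod e e ` \<rho>"
    then obtain z where z: "(e a, e b) = map_prod e e z" "z \<in> \<rho>" by (rule imageE)
    obtain c d where zcd: "z = (c, d)" by (cases z)
    have "a = c" "b = d" using z(1) injD[OF assms(1)] unfolding zcd by auto
    then show "(a, b) \<in> \<rho>" using z(2) zcd by simp
  qed (rule rev_image_eqI, assumption, simp)
  have sub: "map_prod e e ` \<rho> \<subseteq> e ` carrier P \<times> e ` carrier P"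
    using eq unfolding equiv_def by auto
  have allp: "\<And>x. x \<in> map_prod e e ` \<rho> \<Longrightarrow> \<exists>a b. x = (e a, e b)" by auto
  show "equiv (carrier (imgalg e P)) (map_prod e e ` \<rho>)"
  proof (rule equivI)
    show "map_prod e e ` \<rho> \<subseteq> carrier (imgalg e P) \<times> carrier (imgalg e P)" using sub by simp
    show "refl_on (carrier (imgalg e P)) (map_prod e e ` \<rho>)"
      unfolding refl_on_def
    proof
      fix x assume "x \<in> carrier (imgalg e P)"
      then obtain a where a: "a \<in> carrier P" "x = e a" by auto
      then have "(a, a) \<in> \<rho>" using eq unfolding equiv_def refl_on_def by blast
      then show "(x, x) \<in> map_prod e e ` \<rho>" using a mem by simp
    qed
    show "sym (map_prod e e ` \<rho>)"
      unfolding sym_def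
    proof (intro allI impI)
      fix x y assume "(x, y) \<in> map_prod e e ` \<rho>"
      then obtain a b where ab: "x = e a" "y = e b" "(a, b) \<in> \<rho>" using mem by blast
      then have "(b, a) \<in> \<rho>" using eq unfolding equiv_def sym_def by blast
      then show "(y, x) \<in> map_prod e e ` \<rho>" using ab mem by simp
    qed
    show "trans (map_prod e e ` \<rho>)"
      unfolding trans_def
    proof (intro allI impI)
      fix x y z assume h1: "(x, y) \<in> map_prod e e ` \<rho>" and h2: "(y, z) \<in> map_prod e e ` \<rho>"
      obtain a b where ab: "x = e a" "y = e b" "(a, b) \<in> \<rho>" using h1 mem by blast
      obtain c d where cd: "y = e c" "z = e d" "(c, d) \<in> \<rho>" using h2 mem by blast
      have "b = c" using ab(2) cd(1) injD[OF assms(1)] by simp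
      then have "(a, d) \<in> \<rho>" using ab(3) cd(3) eq unfolding equiv_def trans_def by blast
      then show "(x, z) \<in> map_prod e e ` \<rho>" using ab cd mem by simp
    qed
  qed
  show "\<forall>f xs ys. length xs = ar f \<and> length ys = ar f \<and> list_all2 (\<lambda>x y. (x, y) \<in> map_prod e e ` \<rho>) xs ys \<longrightarrow>
        (ops (imgalg e P) f xs, ops (imgalg e P) f ys) \<in> map_prod e e ` \<rho>"
  proof (intro allI impI)
    fix f xs ys assume h: "length xs = ar f \<and> length ys = ar f \<and> list_all2 (\<lambda>x y. (x, y) \<in> map_prod e e ` \<rho>) xs ys"
    have "list_all2 (\<lambda>x y. (x, y) \<in> \<rho>) (map (inv e) xs) (map (inv e) ys)"
      using h unfolding list.rel_map
      by (rule list_all2_mono[OF conjunct2[OF conjunct2]]) (auto simp: inv_f_f assms(1))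
    then have "(ops P f (map (inv e) xs), ops P f (map (inv e) ys)) \<in> \<rho>"
      using assms(2) h by (simp add: is_congruence_def)
    then show "(ops (imgalg e P) f xs, ops (imgalg e P) f ys) \<in> map_prod e e ` \<rho>"
      by (simp add: rev_image_eqI)
  qed
qed

lemma join_upper:
  assumes "\<alpha> \<in> Con ar B" "\<beta> \<in> Con ar B" "(u, pa) \<in> \<beta>" "(pa, pb) \<in> \<alpha>" "(pb, v) \<in> \<beta>"
  shows "(u, v) \<in> con_join ar B \<alpha> \<beta>"
  unfolding con_join_def
proof
  fix \<theta> assume "\<theta> \<in> {\<theta> \<in> Con ar B. \<alpha> \<union> \<beta> \<subseteq> \<theta>}"
  then have "trans \<theta>" "\<alpha> \<union> \<beta> \<subseteq> \<theta>" by (auto simp: Con_def is_congruence_def equiv_def)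
  then show "(u, v) \<in> \<theta>" using assms(3-5) by (meson UnCI subsetD transE)
qed

lemma modlaw:
  assumes "con_modular ar B" "\<sigma> \<in> Con ar B" "\<tau> \<in> Con ar B" "\<pi> \<in> Con ar B"
    "\<pi> \<inter> \<tau> \<in> Con ar B" "\<sigma> \<subseteq> \<tau>" "\<pi> \<inter> \<tau> \<subseteq> \<sigma>" "(u, v) \<in> \<tau>"
    "(u, pa) \<in> \<pi>" "(pa, pb) \<in> \<sigma>" "(pb, v) \<in> \<pi>"
  shows "(u, v) \<in> \<sigma>"
proof -
  have "(u, v) \<in> con_join ar B \<sigma> \<pi> \<inter> \<tau>"
    by (rule IntI[OF join_upper[OF assms(2) assms(4) assms(9) assms(10) assms(11)] assms(8)])
  also have "\<dots> = con_join ar B \<sigma> (\<pi> \<inter> \<tau>)"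
    using assms(1)[unfolded con_modular_def, rule_format, OF assms(2) assms(4) assms(3) assms(6)] by simp
  also have "\<dots> \<subseteq> \<sigma>" unfolding con_join_def using assms(2,7) by blast
  finally show ?thesis .
qed

lemma cong_Int:
  assumes "is_congruence ar B \<alpha>" "is_congruence ar B \<beta>"
  shows "is_congruence ar B (\<alpha> \<inter> \<beta>)"
proof -
  have e: "equiv (carrier B) (\<alpha> \<inter> \<beta>)"
    using assms unfolding is_congruence_def equiv_def refl_on_def sym_def trans_def by blast
  have "(ops B f xs, ops B f ys) \<in> \<alpha> \<inter> \<beta>"
    if "length xs = ar f" "length ys = ar f" "list_all2 (\<lambda>x y. (x, y) \<in> \<alpha> \<inter> \<beta>) xs ys" for f xs ys
  proof -
    have "list_all2 (\<lambda>x y. (x, y) \<in> \<alpha>) xs ys" "list_all2 (\<lambda>x y. (x, y) \<in> \<beta>) xs ys"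
      using that(3) by (auto elim: list_all2_mono)
    then show ?thesis using assms that(1,2) unfolding is_congruence_def by blast
  qed
  then show ?thesis using e unfolding is_congruence_def by blast
qed

definition sel :: "(nat \<Rightarrow> 'a) \<Rightarrow> nat" where
  "sel g = (LEAST i. g (Suc i) \<noteq> g 0)"

definition enc :: "(nat \<Rightarrow> 'a) \<Rightarrow> ((nat \<Rightarrow> 'a) \<Rightarrow> 'a) set" where
  "enc t = {t \<circ> sel}"

lemma inj_enc: "inj enc"
  unfolding inj_def
proof (intro allI impI)
  fix t t' :: "nat \<Rightarrow> 'a" assume h: "enc t = enc t'"
  show "t = t'"
  proof (cases "\<exists>p q :: 'a. p \<noteq> q")
    case False
    then show ?thesis by (auto intro: ext)
  next
    case True
    then obtain p q :: 'a where pq: "p \<noteq> q" by blast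
    have sn: "sel (\<lambda>i. if i = Suc n then q else p) = n" for n :: nat
      unfolding sel_def by (rule Least_equality) (use pq in \<open>auto split: if_splits\<close>)
    have c: "t \<circ> (sel :: (nat \<Rightarrow> 'a) \<Rightarrow> nat) = t' \<circ> sel" using h by (simp add: enc_def)
    show ?thesis
    proof (rule ext)
      fix n
      have "t (sel (\<lambda>i. if i = Suc n then q else p)) = t' (sel (\<lambda>i. if i = Suc n then q else p))"
        using c by (metis comp_apply)
      then show "t n = t' n" using sn by simp
    qed
  qed
qed

lemma modlaw_tuples:
  fixes A :: "('a, 'f) alg" and \<Sigma> :: "(('f, nat) trm \<times> ('f, nat) trm) set"
  assumes CM: "cm_variety ar \<Sigma> TYPE('a)"
    and A_in: "in_variety ar \<Sigma> A"
    and clos: "\<And>f xs. length xs = ar f \<Longrightarrow> set xs \<subseteq> X \<Longrightarrow> (\<lambda>i. ops A f (map (\<lambda>x. x i) xs)) \<in> X"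
    and sub: "\<And>t i. t \<in> X \<Longrightarrow> t i \<in> carrier A"
    and cs: "is_congruence ar (prodalg A X) \<sigma>"
    and ct: "is_congruence ar (prodalg A X) \<tau>"
    and cp: "is_congruence ar (prodalg A X) \<pi>"
    and le1: "\<sigma> \<subseteq> \<tau>" and le2: "\<pi> \<inter> \<tau> \<subseteq> \<sigma>"
    and h: "(u, v) \<in> \<tau>" "(u, pa) \<in> \<pi>" "(pa, pb) \<in> \<sigma>" "(pb, v) \<in> \<pi>"
  shows "(u, v) \<in> \<sigma>"
proof -
  define e :: "(nat \<Rightarrow> 'a) \<Rightarrow> ((nat \<Rightarrow> 'a) \<Rightarrow> 'a) set" where "e = enc"
  have e: "inj e" unfolding e_def by (rule inj_enc)
  let ?B = "imgalg e (prodalg A X)"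
  have "in_variety ar \<Sigma> (prodalg A X)"
    by (rule prodalg_variety[OF A_in]) (use clos sub in auto)
  then have "in_variety ar \<Sigma> ?B" by (rule imgalg_variety[OF e])
  then have mod: "con_modular ar ?B" using CM by (simp add: cm_variety_def)
  let ?m = "\<lambda>r. map_prod e e ` r"
  have ci: "is_congruence ar (prodalg A X) (\<pi> \<inter> \<tau>)" by (rule cong_Int[OF cp ct])
  have im_int: "?m \<pi> \<inter> ?m \<tau> = ?m (\<pi> \<inter> \<tau>)"
  proof
    show "?m \<pi> \<inter> ?m \<tau> \<subseteq> ?m (\<pi> \<inter> \<tau>)"
    proof
      fix z assume "z \<in> ?m \<pi> \<inter> ?m \<tau>"
      then obtain a b c d where ab: "(a, b) \<in> \<pi>" "(c, d) \<in> \<tau>" "z = (e a, e b)" "z = (e c, e d)" by auto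
      then have "e a = e c" "e b = e d" by auto
      then have "a = c" "b = d" using injD[OF e] by auto
      then have "(a, b) \<in> \<pi> \<inter> \<tau>" using ab by auto
      then show "z \<in> ?m (\<pi> \<inter> \<tau>)" using ab(3) by force
    qed
  qed auto
  have "(e u, e v) \<in> ?m \<sigma>"
  proof (rule modlaw[OF mod, of _ "?m \<tau>" "?m \<pi>" _ _ "e pa" "e pb"])
    show "?m \<sigma> \<in> Con ar ?B" using imgalg_cong[OF e cs] by (simp add: Con_def)
    show "?m \<tau> \<in> Con ar ?B" using imgalg_cong[OF e ct] by (simp add: Con_def)
    show "?m \<pi> \<in> Con ar ?B" using imgalg_cong[OF e cp] by (simp add: Con_def)
    show "?m \<pi> \<inter> ?m \<tau> \<in> Con ar ?B" unfolding im_int using imgalg_cong[OF e ci] by (simp add: Con_def)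
    show "?m \<sigma> \<subseteq> ?m \<tau>" using le1 by (rule image_mono)
    show "?m \<pi> \<inter> ?m \<tau> \<subseteq> ?m \<sigma>" unfolding im_int using le2 by (rule image_mono)
    show "(e u, e v) \<in> ?m \<tau>" by (rule rev_image_eqI[OF h(1)]) simp
    show "(e u, e pa) \<in> ?m \<pi>" by (rule rev_image_eqI[OF h(2)]) simp
    show "(e pa, e pb) \<in> ?m \<sigma>" by (rule rev_image_eqI[OF h(3)]) simp
    show "(e pb, e v) \<in> ?m \<pi>" by (rule rev_image_eqI[OF h(4)]) simp
  qed
  then obtain z where z': "(e u, e v) = map_prod e e z" "z \<in> \<sigma>" by (rule imageE)
  note z = z'(2) z'(1)
  obtain a b where zab: "z = (a, b)" by (cases z)
  have "u = a" "v = b" using z(2) injD[OF e] unfolding zab by auto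
  then show ?thesis using z(1) zab by simp
qed

lemma l2_set: "list_all2 (\<lambda>x y. (x, y) \<in> {(s, t). s \<in> X \<and> t \<in> X \<and> P s t}) xs ys \<Longrightarrow> set xs \<subseteq> X \<and> set ys \<subseteq> X"
  by (induction xs ys rule: list_all2_induct) auto

lemma l2_map: "list_all2 (\<lambda>x y. (x, y) \<in> {(s, t). s \<in> X \<and> t \<in> X \<and> s i = t i}) xs ys \<Longrightarrow> map (\<lambda>x. x i) xs = map (\<lambda>x. x i) ys"
  by (induction xs ys rule: list_all2_induct) auto

lemma equiv_restr:
  assumes "\<And>s. s \<in> X \<Longrightarrow> R s s" "\<And>s t. s \<in> X \<Longrightarrow> t \<in> X \<Longrightarrow> R s t \<Longrightarrow> R t s"
    "\<And>s t u. s \<in> X \<Longrightarrow> t \<in> X \<Longrightarrow> u \<in> X \<Longrightarrow> R s t \<Longrightarrow> R t u \<Longrightarrow> R s u"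
  shows "equiv X {(s, t). s \<in> X \<and> t \<in> X \<and> R s t}"
proof (rule equivI)
  show "{(s, t). s \<in> X \<and> t \<in> X \<and> R s t} \<subseteq> X \<times> X" by auto
  show "refl_on X {(s, t). s \<in> X \<and> t \<in> X \<and> R s t}" unfolding refl_on_def using assms(1) by simp
  show "sym {(s, t). s \<in> X \<and> t \<in> X \<and> R s t}" unfolding sym_def using assms(2) by simp
  show "trans {(s, t). s \<in> X \<and> t \<in> X \<and> R s t}" unfolding trans_def
  proof (intro allI impI)
    fix x y z assume "(x, y) \<in> {(s, t). s \<in> X \<and> t \<in> X \<and> R s t}" "(y, z) \<in> {(s, t). s \<in> X \<and> t \<in> X \<and> R s t}"
    then show "(x, z) \<in> {(s, t). s \<in> X \<and> t \<in> X \<and> R s t}" using assms(3)[of x y z] by simp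
  qed
qed

lemma E_cong:
  assumes clos: "\<And>f xs. length xs = ar f \<Longrightarrow> set xs \<subseteq> X \<Longrightarrow> (\<lambda>i. ops A f (map (\<lambda>x. x i) xs)) \<in> X"
  shows "is_congruence ar (prodalg A X) {(s, t). s \<in> X \<and> t \<in> X \<and> s i = t i}"
  unfolding is_congruence_def
proof (intro conjI allI impI)
  show "equiv (carrier (prodalg A X)) {(s, t). s \<in> X \<and> t \<in> X \<and> s i = t i}"
    unfolding prodalg_simps by (rule equiv_restr) auto
  fix f xs ys assume h: "length xs = ar f \<and> length ys = ar f \<and>
     list_all2 (\<lambda>x y. (x, y) \<in> {(s, t). s \<in> X \<and> t \<in> X \<and> s i = t i}) xs ys"
  then have s1: "set xs \<subseteq> X" "set ys \<subseteq> X" and m: "map (\<lambda>x. x i) xs = map (\<lambda>x. x i) ys"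
    using l2_set[of X "\<lambda>s t. s i = t i" xs ys] l2_map[of X i xs ys] by auto
  have c: "(\<lambda>i. ops A f (map (\<lambda>x. x i) xs)) \<in> X" "(\<lambda>i. ops A f (map (\<lambda>x. x i) ys)) \<in> X"
    using clos s1 h by auto
  show "(ops (prodalg A X) f xs, ops (prodalg A X) f ys) \<in> {(s, t). s \<in> X \<and> t \<in> X \<and> s i = t i}"
    using c m by simp
qed

lemma Q_cong:
  assumes clos: "\<And>f xs. length xs = ar f \<Longrightarrow> set xs \<subseteq> X \<Longrightarrow> (\<lambda>i. ops A f (map (\<lambda>x. x i) xs)) \<in> X"
    and inth: "\<And>s. s \<in> X \<Longrightarrow> (s i, s j) \<in> \<theta>"
    and rho_refl: "\<And>p. p \<in> \<theta> \<Longrightarrow> (p, p) \<in> \<rho>"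
    and rho_sym: "\<And>p q. (p, q) \<in> \<rho> \<Longrightarrow> (q, p) \<in> \<rho>"
    and rho_trans: "\<And>p q r. (p, q) \<in> \<rho> \<Longrightarrow> (q, r) \<in> \<rho> \<Longrightarrow> (p, r) \<in> \<rho>"
    and rho_comp: "\<And>f ps qs. length ps = ar f \<Longrightarrow> length qs = ar f \<Longrightarrow> list_all2 (\<lambda>p q. (p, q) \<in> \<rho>) ps qs \<Longrightarrow>
        ((ops A f (map fst ps), ops A f (map snd ps)), (ops A f (map fst qs), ops A f (map snd qs))) \<in> \<rho>"
  shows "is_congruence ar (prodalg A X) {(s, t). s \<in> X \<and> t \<in> X \<and> ((s i, s j), (t i, t j)) \<in> \<rho>}"
  unfolding is_congruence_def
proof (intro conjI allI impI)
  show "equiv (carrier (prodalg A X)) {(s, t). s \<in> X \<and> t \<in> X \<and> ((s i, s j), (t i, t j)) \<in> \<rho>}"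
    unfolding prodalg_simps
  proof (rule equiv_restr)
    show "((s i, s j), (s i, s j)) \<in> \<rho>" if "s \<in> X" for s using inth[OF that] by (rule rho_refl)
    show "((t i, t j), (s i, s j)) \<in> \<rho>" if "((s i, s j), (t i, t j)) \<in> \<rho>" for s t using that by (rule rho_sym)
    show "((s i, s j), (u i, u j)) \<in> \<rho>" if "((s i, s j), (t i, t j)) \<in> \<rho>" "((t i, t j), (u i, u j)) \<in> \<rho>" for s t u
      using that by (rule rho_trans)
  qed
  fix f xs ys assume h: "length xs = ar f \<and> length ys = ar f \<and>
     list_all2 (\<lambda>x y. (x, y) \<in> {(s, t). s \<in> X \<and> t \<in> X \<and> ((s i, s j), (t i, t j)) \<in> \<rho>}) xs ys"
  then have X: "set xs \<subseteq> X" "set ys \<subseteq> X"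
    using l2_set[of X "\<lambda>s t. ((s i, s j), (t i, t j)) \<in> \<rho>" xs ys] by auto
  have "list_all2 (\<lambda>p q. (p, q) \<in> \<rho>) (map (\<lambda>x. (x i, x j)) xs) (map (\<lambda>x. (x i, x j)) ys)"
    using h unfolding list.rel_map by (auto elim: list_all2_mono)
  from rho_comp[OF _ _ this] h
  have "((ops A f (map (\<lambda>x. x i) xs), ops A f (map (\<lambda>x. x j) xs)),
         (ops A f (map (\<lambda>x. x i) ys), ops A f (map (\<lambda>x. x j) ys))) \<in> \<rho>"
    by (simp add: comp_def)
  moreover have c: "(\<lambda>i. ops A f (map (\<lambda>x. x i) xs)) \<in> X" "(\<lambda>i. ops A f (map (\<lambda>x. x i) ys)) \<in> X"
    using clos X h by auto
  ultimately show "(ops (prodalg A X) f xs, ops (prodalg A X) f ys) \<in> {(s, t). s \<in> X \<and> t \<in> X \<and> ((s i, s j), (t i, t j)) \<in> \<rho>}"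
    by simp
qed

definition tp :: "'a \<Rightarrow> 'a \<Rightarrow> 'a \<Rightarrow> 'a \<Rightarrow> nat \<Rightarrow> 'a" where
  "tp a b c d = (\<lambda>i. if i = 0 then a else if i = 1 then b else if i = 2 then c else d)"

lemma tp_simps[simp]: "tp a b c d 0 = a" "tp a b c d 1 = b" "tp a b c d 2 = c" "tp a b c d 3 = d"
  "tp a b c d (Suc 0) = b" "tp a b c d (Suc (Suc 0)) = c" "tp a b c d (Suc (Suc (Suc 0))) = d"
  by (simp_all add: tp_def)

lemma tp_all: "(\<forall>i. tp a b c d i \<in> S) \<longleftrightarrow> a \<in> S \<and> b \<in> S \<and> c \<in> S \<and> d \<in> S"
proof
  assume "\<forall>i. tp a b c d i \<in> S" then show "a \<in> S \<and> b \<in> S \<and> c \<in> S \<and> d \<in> S"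
    by (metis tp_simps)
qed (simp add: tp_def)

definition Xc :: "('a, 'f) alg \<Rightarrow> 'a rel \<Rightarrow> (nat \<times> nat) set \<Rightarrow> (nat \<Rightarrow> 'a) set" where
  "Xc A \<theta> C = {t. (\<forall>i. t i \<in> carrier A) \<and> (\<forall>(i, j)\<in>C. (t i, t j) \<in> \<theta>)}"

lemma Xc_clos:
  assumes "is_alg ar A" "is_congruence ar A \<theta>" "length xs = ar f" "set xs \<subseteq> Xc A \<theta> C"
  shows "(\<lambda>i. ops A f (map (\<lambda>x. x i) xs)) \<in> Xc A \<theta> C"
proof -
  have "ops A f (map (\<lambda>x. x i) xs) \<in> carrier A" for i
  proof -
    have "set (map (\<lambda>x. x i) xs) \<subseteq> carrier A" using assms(4) by (auto simp: Xc_def)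
    then show ?thesis using assms(1,3) unfolding is_alg_def by simp
  qed
  moreover have "(ops A f (map (\<lambda>x. x i) xs), ops A f (map (\<lambda>x. x j) xs)) \<in> \<theta>" if "(i, j) \<in> C" for i j
  proof -
    have "list_all2 (\<lambda>x y. (x, y) \<in> \<theta>) (map (\<lambda>x. x i) xs) (map (\<lambda>x. x j) xs)"
      using assms(4) that by (auto simp: list_all2_conv_all_nth Xc_def dest!: nth_mem)
    then show ?thesis using assms(2,3) by (simp add: is_congruence_def)
  qed
  ultimately show ?thesis by (auto simp: Xc_def)
qed

context
  fixes ar :: "'f \<Rightarrow> nat" and \<Sigma> :: "(('f, nat) trm \<times> ('f, nat) trm) set"
    and A :: "('a, 'f) alg" and \<theta> :: "'a rel" and \<rho> :: "('a \<times> 'a) rel"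
  assumes CM: "cm_variety ar \<Sigma> TYPE('a)"
    and A_in: "in_variety ar \<Sigma> A"
    and thc: "is_congruence ar A \<theta>"
    and rho_sub: "\<And>p q. (p, q) \<in> \<rho> \<Longrightarrow> p \<in> \<theta> \<and> q \<in> \<theta>"
    and rho_refl: "\<And>p. p \<in> \<theta> \<Longrightarrow> (p, p) \<in> \<rho>"
    and rho_sym: "\<And>p q. (p, q) \<in> \<rho> \<Longrightarrow> (q, p) \<in> \<rho>"
    and rho_trans: "\<And>p q r. (p, q) \<in> \<rho> \<Longrightarrow> (q, r) \<in> \<rho> \<Longrightarrow> (p, r) \<in> \<rho>"
    and rho_comp: "\<And>f ps qs. length ps = ar f \<Longrightarrow> length qs = ar f \<Longrightarrow> list_all2 (\<lambda>p q. (p, q) \<in> \<rho>) ps qs \<Longrightarrow>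
        ((ops A f (map fst ps), ops A f (map snd ps)), (ops A f (map fst qs), ops A f (map snd qs))) \<in> \<rho>"
    and rho_diag: "\<And>a b c d. ((a, b), (c, d)) \<in> \<rho> \<Longrightarrow> ((a, a), (c, c)) \<in> \<rho> \<and> ((b, b), (d, d)) \<in> \<rho>"
begin

lemma th_carr: "(x, y) \<in> \<theta> \<Longrightarrow> x \<in> carrier A \<and> y \<in> carrier A"
  using thc unfolding is_congruence_def equiv_def refl_on_def by auto

lemma th_trans: "(x, y) \<in> \<theta> \<Longrightarrow> (y, z) \<in> \<theta> \<Longrightarrow> (x, z) \<in> \<theta>"
  using thc unfolding is_congruence_def equiv_def trans_def by blast

lemma th_sym: "(x, y) \<in> \<theta> \<Longrightarrow> (y, x) \<in> \<theta>"
  using thc unfolding is_congruence_def equiv_def sym_def by blast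

lemma isalg: "is_alg ar A" using A_in by (simp add: in_variety_def)

lemma lemS:
  assumes xy: "(x, y) \<in> \<theta>" and r: "((y, z), (y, z')) \<in> \<rho>"
  shows "((x, z), (x, z')) \<in> \<rho>"
proof -
  define X where "X = Xc A \<theta> {(0, 2), (1, 2)}"
  have clos: "\<And>f xs. length xs = ar f \<Longrightarrow> set xs \<subseteq> X \<Longrightarrow> (\<lambda>i. ops A f (map (\<lambda>x. x i) xs)) \<in> X"
    unfolding X_def by (rule Xc_clos[OF isalg thc])
  have sub: "\<And>t i. t \<in> X \<Longrightarrow> t i \<in> carrier A" by (auto simp: X_def Xc_def)
  define E where "E = (\<lambda>i. {(s, t). s \<in> X \<and> t \<in> X \<and> s i = t i})"
  define Q where "Q = (\<lambda>i j. {(s, t). s \<in> X \<and> t \<in> X \<and> ((s i, s j), (t i, t j)) \<in> \<rho>})"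
  have cE: "is_congruence ar (prodalg A X) (E i)" for i
    unfolding E_def by (rule E_cong[OF clos])
  have cQ: "is_congruence ar (prodalg A X) (Q i j)" if "\<And>s. s \<in> X \<Longrightarrow> (s i, s j) \<in> \<theta>" for i j
    unfolding Q_def by (rule Q_cong[OF clos that rho_refl rho_sym rho_trans rho_comp])
  have q02: "\<And>s. s \<in> X \<Longrightarrow> (s 0, s 2) \<in> \<theta>" and q12: "\<And>s. s \<in> X \<Longrightarrow> (s 1, s 2) \<in> \<theta>"
    by (auto simp: X_def Xc_def)
  have yz: "(y, z) \<in> \<theta>" "(y, z') \<in> \<theta>" using rho_sub[OF r] by auto
  have xz: "(x, z) \<in> \<theta>" "(x, z') \<in> \<theta>" using th_trans[OF xy] yz by auto
  have carr: "x \<in> carrier A" "y \<in> carrier A" "z \<in> carrier A" "z' \<in> carrier A"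
    using th_carr xy yz by auto
  have mem: "tp a b c c \<in> X" if "a \<in> carrier A" "b \<in> carrier A" "c \<in> carrier A" "(a, c) \<in> \<theta>" "(b, c) \<in> \<theta>" for a b c
    using that by (auto simp: X_def Xc_def tp_all)
  have P: "tp y x z z \<in> X" and Qm: "tp y x z' z' \<in> X" and W1: "tp y y z z \<in> X" and W2: "tp y y z' z' \<in> X"
    using mem carr yz xz by auto
  have "(tp y x z z, tp y x z' z') \<in> E 0 \<inter> E 1 \<inter> Q 0 2 \<inter> Q 1 2"
  proof (rule modlaw_tuples[where ar = ar and \<Sigma> = \<Sigma> and A = A and X = X, OF CM A_in, where \<tau> = "E 0 \<inter> E 1 \<inter> Q 0 2" and \<pi> = "E 0 \<inter> E 2"
        and pa = "tp y y z z" and pb = "tp y y z' z'"])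
    show "\<And>f xs. length xs = ar f \<Longrightarrow> set xs \<subseteq> X \<Longrightarrow> (\<lambda>i. ops A f (map (\<lambda>x. x i) xs)) \<in> X"
      by (rule clos)
    show "\<And>t i. t \<in> X \<Longrightarrow> t i \<in> carrier A" by (rule sub)
    show "is_congruence ar (prodalg A X) (E 0 \<inter> E 1 \<inter> Q 0 2 \<inter> Q 1 2)"
      by (intro cong_Int cE cQ q02 q12)
    show "is_congruence ar (prodalg A X) (E 0 \<inter> E 1 \<inter> Q 0 2)"
      by (intro cong_Int cE cQ q02 q12)
    show "is_congruence ar (prodalg A X) (E 0 \<inter> E 2)"
      by (intro cong_Int cE)
    show "E 0 \<inter> E 1 \<inter> Q 0 2 \<inter> Q 1 2 \<subseteq> E 0 \<inter> E 1 \<inter> Q 0 2" by blast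
    show "(E 0 \<inter> E 2) \<inter> (E 0 \<inter> E 1 \<inter> Q 0 2) \<subseteq> E 0 \<inter> E 1 \<inter> Q 0 2 \<inter> Q 1 2"
      unfolding E_def Q_def using rho_refl q12 by auto
    show "(tp y x z z, tp y x z' z') \<in> E 0 \<inter> E 1 \<inter> Q 0 2"
      unfolding E_def Q_def using P Qm r by auto
    show "(tp y x z z, tp y y z z) \<in> E 0 \<inter> E 2"
      unfolding E_def using P W1 by auto
    show "(tp y y z z, tp y y z' z') \<in> E 0 \<inter> E 1 \<inter> Q 0 2 \<inter> Q 1 2"
      unfolding E_def Q_def using W1 W2 r by auto
    show "(tp y y z' z', tp y x z' z') \<in> E 0 \<inter> E 2"
      unfolding E_def using Qm W2 by auto
  qed
  then show ?thesis unfolding Q_def by auto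
qed

lemma th_refl: "x \<in> carrier A \<Longrightarrow> (x, x) \<in> \<theta>"
  using thc unfolding is_congruence_def equiv_def refl_on_def by blast

lemma lemM:
  assumes r1: "((a, b), (c, d)) \<in> \<rho>" and r2: "((b, e), (d, f)) \<in> \<rho>"
  shows "((a, e), (c, f)) \<in> \<rho>"
proof -
  define X where "X = Xc A \<theta> {(0, 1), (1, 2), (1, 3), (0, 2), (0, 3)}"
  have clos: "\<And>f xs. length xs = ar f \<Longrightarrow> set xs \<subseteq> X \<Longrightarrow> (\<lambda>i. ops A f (map (\<lambda>x. x i) xs)) \<in> X"
    unfolding X_def by (rule Xc_clos[OF isalg thc])
  have sub: "\<And>t i. t \<in> X \<Longrightarrow> t i \<in> carrier A" by (auto simp: X_def Xc_def)
  define E where "E = (\<lambda>i. {(s, t). s \<in> X \<and> t \<in> X \<and> s i = t i})"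
  define Q where "Q = (\<lambda>i j. {(s, t). s \<in> X \<and> t \<in> X \<and> ((s i, s j), (t i, t j)) \<in> \<rho>})"
  have cE: "is_congruence ar (prodalg A X) (E i)" for i
    unfolding E_def by (rule E_cong[OF clos])
  have cQ: "is_congruence ar (prodalg A X) (Q i j)" if "\<And>s. s \<in> X \<Longrightarrow> (s i, s j) \<in> \<theta>" for i j
    unfolding Q_def by (rule Q_cong[OF clos that rho_refl rho_sym rho_trans rho_comp])
  have q01: "\<And>s. s \<in> X \<Longrightarrow> (s 0, s 1) \<in> \<theta>" and q12: "\<And>s. s \<in> X \<Longrightarrow> (s 1, s 2) \<in> \<theta>"
    and q13: "\<And>s. s \<in> X \<Longrightarrow> (s 1, s 3) \<in> \<theta>" and q02: "\<And>s. s \<in> X \<Longrightarrow> (s 0, s 2) \<in> \<theta>"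
    and q03: "\<And>s. s \<in> X \<Longrightarrow> (s 0, s 3) \<in> \<theta>"
    by (auto simp: X_def Xc_def)
  have ab: "(a, b) \<in> \<theta>" "(c, d) \<in> \<theta>" using rho_sub[OF r1] by auto
  have be: "(b, e) \<in> \<theta>" "(d, f) \<in> \<theta>" using rho_sub[OF r2] by auto
  have ae: "(a, e) \<in> \<theta>" "(c, f) \<in> \<theta>" using th_trans ab be by blast+
  have carr: "a \<in> carrier A" "b \<in> carrier A" "c \<in> carrier A" "d \<in> carrier A" "e \<in> carrier A" "f \<in> carrier A"
    using th_carr ab be by blast+
  have mem: "tp x y y w \<in> X" if "x \<in> carrier A" "y \<in> carrier A" "w \<in> carrier A" "(x, y) \<in> \<theta>" "(y, w) \<in> \<theta>" for x y w
  proof -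
    have "(y, y) \<in> \<theta>" using th_refl that(2) .
    moreover have "(x, w) \<in> \<theta>" using th_trans that(4,5) .
    ultimately show ?thesis using that by (auto simp: X_def Xc_def tp_all)
  qed
  have P: "tp a b b e \<in> X" and Qm: "tp c d d f \<in> X" and W1: "tp a b b b \<in> X" and W2: "tp c d d d \<in> X"
    using mem carr ab be th_refl by auto
  have dd: "((b, b), (d, d)) \<in> \<rho>" using rho_diag[OF r1] by simp
  have "(tp a b b e, tp c d d f) \<in> Q 0 1 \<inter> Q 1 2 \<inter> Q 0 2 \<inter> Q 1 3 \<inter> Q 0 3"
  proof (rule modlaw_tuples[where ar = ar and \<Sigma> = \<Sigma> and A = A and X = X, OF CM A_in,
        where \<tau> = "Q 0 1 \<inter> Q 1 2 \<inter> Q 1 3 \<inter> Q 0 2" and \<pi> = "E 0 \<inter> E 1 \<inter> E 2"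
        and pa = "tp a b b b" and pb = "tp c d d d"])
    show "\<And>f xs. length xs = ar f \<Longrightarrow> set xs \<subseteq> X \<Longrightarrow> (\<lambda>i. ops A f (map (\<lambda>x. x i) xs)) \<in> X"
      by (rule clos)
    show "\<And>t i. t \<in> X \<Longrightarrow> t i \<in> carrier A" by (rule sub)
    show "is_congruence ar (prodalg A X) (Q 0 1 \<inter> Q 1 2 \<inter> Q 0 2 \<inter> Q 1 3 \<inter> Q 0 3)"
      by (intro cong_Int cQ q01 q12 q02 q13 q03)
    show "is_congruence ar (prodalg A X) (Q 0 1 \<inter> Q 1 2 \<inter> Q 1 3 \<inter> Q 0 2)"
      by (intro cong_Int cQ q01 q12 q02 q13 q03)
    show "is_congruence ar (prodalg A X) (E 0 \<inter> E 1 \<inter> E 2)"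
      by (intro cong_Int cE)
    show "Q 0 1 \<inter> Q 1 2 \<inter> Q 0 2 \<inter> Q 1 3 \<inter> Q 0 3 \<subseteq> Q 0 1 \<inter> Q 1 2 \<inter> Q 1 3 \<inter> Q 0 2" by blast
    show "(E 0 \<inter> E 1 \<inter> E 2) \<inter> (Q 0 1 \<inter> Q 1 2 \<inter> Q 1 3 \<inter> Q 0 2) \<subseteq> Q 0 1 \<inter> Q 1 2 \<inter> Q 0 2 \<inter> Q 1 3 \<inter> Q 0 3"
    proof
      fix z assume z: "z \<in> (E 0 \<inter> E 1 \<inter> E 2) \<inter> (Q 0 1 \<inter> Q 1 2 \<inter> Q 1 3 \<inter> Q 0 2)"
      obtain s t where st: "z = (s, t)" by (cases z)
      have sX: "s \<in> X" "t \<in> X" and e0: "s 0 = t 0" and e1: "s 1 = t 1"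
        and r13: "((s 1, s 3), (t 1, t 3)) \<in> \<rho>"
        using z unfolding st E_def Q_def by auto
      have "((s 1, s 3), (s 1, t 3)) \<in> \<rho>" using r13 e1 by simp
      then have "((s 0, s 3), (s 0, t 3)) \<in> \<rho>" using lemS q01[OF sX(1)] by blast
      then have "(s, t) \<in> Q 0 3" using sX e0 unfolding Q_def by simp
      then show "z \<in> Q 0 1 \<inter> Q 1 2 \<inter> Q 0 2 \<inter> Q 1 3 \<inter> Q 0 3" using z st by blast
    qed
    show "(tp a b b e, tp c d d f) \<in> Q 0 1 \<inter> Q 1 2 \<inter> Q 1 3 \<inter> Q 0 2"
      unfolding Q_def using P Qm r1 r2 dd by auto
    show "(tp a b b e, tp a b b b) \<in> E 0 \<inter> E 1 \<inter> E 2"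
      unfolding E_def using P W1 by auto
    show "(tp a b b b, tp c d d d) \<in> Q 0 1 \<inter> Q 1 2 \<inter> Q 0 2 \<inter> Q 1 3 \<inter> Q 0 3"
      unfolding Q_def using W1 W2 r1 dd by auto
    show "(tp c d d d, tp c d d f) \<in> E 0 \<inter> E 1 \<inter> E 2"
      unfolding E_def using Qm W2 by auto
  qed
  then show ?thesis unfolding Q_def by auto
qed

end

lemma Pow_single: "Pow {x} = {{}, {x}}" by (auto simp: Pow_def)

lemma ext_single:
  assumes "\<zeta> \<in> extensional (Pow {x})" "\<eta> \<in> extensional (Pow {x})" "\<zeta> {} = \<eta> {}" "\<zeta> {x} = \<eta> {x}"
  shows "\<zeta> = \<eta>"
  by (rule extensionalityI[OF assms(1,2)]) (use assms(3,4) in \<open>auto simp: Pow_single\<close>)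

lemma face_ext: "face S i j \<gamma> \<in> extensional (Pow (S - {i}))"
  by (simp add: face_def)

lemma diff_k: "k \<noteq> l \<Longrightarrow> {k, l} - {k} = {l}" and diff_l: "k \<noteq> l \<Longrightarrow> {k, l} - {l} = {k}"
  by auto

lemma face_vals:
  assumes "k \<noteq> l"
  shows "face {k, l} k False \<gamma> {} = \<gamma> {}" "face {k, l} k False \<gamma> {l} = \<gamma> {l}"
    "face {k, l} k True \<gamma> {} = \<gamma> {k}" "face {k, l} k True \<gamma> {l} = \<gamma> {k, l}"
    "face {k, l} l False \<gamma> {} = \<gamma> {}" "face {k, l} l False \<gamma> {k} = \<gamma> {k}"
    "face {k, l} l True \<gamma> {} = \<gamma> {l}" "face {k, l} l True \<gamma> {k} = \<gamma> {k, l}"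
  using assms by (auto simp: face_def insert_commute)

lemma refl_vals:
  assumes "k \<noteq> l"
  shows "refl_cube {k, l} l j \<gamma> {} = face {k, l} l j \<gamma> {}"
    "refl_cube {k, l} l j \<gamma> {l} = face {k, l} l j \<gamma> {}"
    "refl_cube {k, l} l j \<gamma> {k} = face {k, l} l j \<gamma> {k}"
    "refl_cube {k, l} l j \<gamma> {k, l} = face {k, l} l j \<gamma> {k}"
  using assms by (auto simp: refl_cube_def glue_def diff_l)

definition pc :: "nat \<Rightarrow> 'a \<times> 'a \<Rightarrow> nat set \<Rightarrow> 'a" where
  "pc l p = (\<lambda>g\<in>Pow {l}. if g = {} then fst p else snd p)"

lemma pc_vals[simp]: "pc l p {} = fst p" "pc l p {l} = snd p"
  by (auto simp: pc_def)

lemma pc_ext: "pc l p \<in> extensional (Pow {l})" by (simp add: pc_def)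

theorem lemma2p8:
  fixes ar :: "'f \<Rightarrow> nat"
    and \<Sigma> :: "(('f, nat) trm \<times> ('f, nat) trm) set"
    and A :: "('a, 'f) alg"
    and k l :: nat
    and R :: "(nat set \<Rightarrow> 'a) set"
  assumes CM: "cm_variety ar \<Sigma> TYPE('a)"
    and A_in: "in_variety ar \<Sigma> A"
    and kl: "k \<noteq> l"
    and tol: "cube_tolerance ar A {k, l} R"
    and h1: "is_congruence ar A (as_pairs l (face_set {k, l} k False R))"
    and h2: "is_congruence ar (cube_subalg {l} A (face_set {k, l} k False R))
               (face_rel {k, l} k R)"
  shows "cube_congruence ar A {k, l} R"
proof -
  define S where "S = {k, l}"
  define Z where "Z = face_set S k False R"
  define FR where "FR = face_rel S k R"
  define \<theta> where "\<theta> = as_pairs l Z"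
  define \<rho> where "\<rho> = {((\<zeta> {}, \<zeta> {l}), (\<eta> {}, \<eta> {l})) | \<zeta> \<eta>. (\<zeta>, \<eta>) \<in> FR}"
  have thc: "is_congruence ar A \<theta>" using h1 by (simp add: \<theta>_def Z_def S_def)
  have h2': "is_congruence ar (cube_subalg {l} A Z) FR" using h2 by (simp add: Z_def FR_def S_def)
  have eqFR: "equiv Z FR" using h2' by (simp add: is_congruence_def cube_subalg_def)
  have FRZ: "(\<zeta>, \<eta>) \<in> FR \<Longrightarrow> \<zeta> \<in> Z \<and> \<eta> \<in> Z" for \<zeta> \<eta> using eqFR unfolding equiv_def by blast
  have Zext: "\<zeta> \<in> Z \<Longrightarrow> \<zeta> \<in> extensional (Pow {l})" for \<zeta>
    using face_ext[of S k False] kl by (auto simp: Z_def face_set_def S_def diff_k)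
  have Zpc: "\<zeta> \<in> Z \<Longrightarrow> \<zeta> = pc l (\<zeta> {}, \<zeta> {l})" for \<zeta>
    by (rule ext_single[OF Zext pc_ext]) simp_all
  have th_iff: "p \<in> \<theta> \<longleftrightarrow> pc l p \<in> Z" for p
  proof
    assume "p \<in> \<theta>"
    then obtain \<zeta> where "\<zeta> \<in> Z" "p = (\<zeta> {}, \<zeta> {l})" by (auto simp: \<theta>_def as_pairs_def)
    then show "pc l p \<in> Z" using Zpc by simp
  next
    assume "pc l p \<in> Z"
    then show "p \<in> \<theta>" unfolding \<theta>_def as_pairs_def by (intro CollectI exI[of _ "pc l p"]) simp
  qed
  have rho_iff: "(p, q) \<in> \<rho> \<longleftrightarrow> (pc l p, pc l q) \<in> FR" for p q
  proof
    assume "(p, q) \<in> \<rho>"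
    then obtain \<zeta> \<eta> where z: "(\<zeta>, \<eta>) \<in> FR" "p = (\<zeta> {}, \<zeta> {l})" "q = (\<eta> {}, \<eta> {l})"
      by (auto simp: \<rho>_def)
    have "\<zeta> = pc l p" "\<eta> = pc l q" using Zpc FRZ[OF z(1)] z(2,3) by auto
    then show "(pc l p, pc l q) \<in> FR" using z(1) by simp
  next
    assume "(pc l p, pc l q) \<in> FR"
    then show "(p, q) \<in> \<rho>" unfolding \<rho>_def
      by (intro CollectI exI[of _ "pc l p"] exI[of _ "pc l q"]) simp
  qed
  have rho_sub: "\<And>p q. (p, q) \<in> \<rho> \<Longrightarrow> p \<in> \<theta> \<and> q \<in> \<theta>"
    using rho_iff th_iff FRZ by blast
  have rho_refl: "\<And>p. p \<in> \<theta> \<Longrightarrow> (p, p) \<in> \<rho>"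
    using rho_iff th_iff eqFR unfolding equiv_def refl_on_def by blast
  have rho_sym: "\<And>p q. (p, q) \<in> \<rho> \<Longrightarrow> (q, p) \<in> \<rho>"
    using rho_iff eqFR unfolding equiv_def sym_def by blast
  have rho_trans: "\<And>p q r. (p, q) \<in> \<rho> \<Longrightarrow> (q, r) \<in> \<rho> \<Longrightarrow> (p, r) \<in> \<rho>"
    using rho_iff eqFR unfolding equiv_def trans_def by blast
  have rho_comp: "((ops A f (map fst ps), ops A f (map snd ps)), (ops A f (map fst qs), ops A f (map snd qs))) \<in> \<rho>"
    if "length ps = ar f" "length qs = ar f" "list_all2 (\<lambda>p q. (p, q) \<in> \<rho>) ps qs" for f ps qs
  proof -
    have l2: "list_all2 (\<lambda>x y. (x, y) \<in> FR) (map (pc l) ps) (map (pc l) qs)"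
      using that(3) unfolding list.rel_map by (rule list_all2_mono) (simp add: rho_iff)
    have "(ops (cube_subalg {l} A Z) f (map (pc l) ps), ops (cube_subalg {l} A Z) f (map (pc l) qs)) \<in> FR"
      using h2' that(1,2) l2 unfolding is_congruence_def by simp
    moreover have "ops (cube_subalg {l} A Z) f (map (pc l) xs) = pc l (ops A f (map fst xs), ops A f (map snd xs))" for xs
    proof (rule ext_single[where x = l])
      show "ops (cube_subalg {l} A Z) f (map (pc l) xs) \<in> extensional (Pow {l})"
        by (simp add: cube_subalg_def cube_alg_def)
    qed (simp_all add: cube_subalg_def cube_alg_def pc_ext comp_def)
    ultimately show ?thesis by (simp add: rho_iff)
  qed
  have FR_R: "(\<zeta>, \<eta>) \<in> FR \<longleftrightarrow> (\<exists>\<gamma>\<in>R. \<zeta> = face S k False \<gamma> \<and> \<eta> = face S k True \<gamma>)" for \<zeta> \<eta>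
    by (auto simp: FR_def face_rel_def)
  have rho_R: "((\<gamma> {}, \<gamma> {l}), (\<gamma> {k}, \<gamma> {k, l})) \<in> \<rho>" if "\<gamma> \<in> R" for \<gamma>
  proof -
    have fr: "(face S k False \<gamma>, face S k True \<gamma>) \<in> FR" using that FR_R by blast
    have eqn: "((\<gamma> {}, \<gamma> {l}), (\<gamma> {k}, \<gamma> {k, l})) =
      ((face S k False \<gamma> {}, face S k False \<gamma> {l}), (face S k True \<gamma> {}, face S k True \<gamma> {l}))"
      by (simp add: S_def face_vals[OF kl])
    show ?thesis unfolding \<rho>_def
      by (rule CollectI, rule exI[of _ "face S k False \<gamma>"], rule exI[of _ "face S k True \<gamma>"]) (use eqn fr in simp)
  qed
  have R_rho: "\<exists>\<gamma>\<in>R. \<gamma> {} = a \<and> \<gamma> {l} = b \<and> \<gamma> {k} = c \<and> \<gamma> {k, l} = d"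
    if rr: "((a, b), (c, d)) \<in> \<rho>" for a b c d
  proof -
    obtain \<zeta> \<eta> where z: "(\<zeta>, \<eta>) \<in> FR" "a = \<zeta> {}" "b = \<zeta> {l}" "c = \<eta> {}" "d = \<eta> {l}"
      using rr unfolding \<rho>_def by blast
    then obtain \<gamma> where "\<gamma> \<in> R" "\<zeta> = face S k False \<gamma>" "\<eta> = face S k True \<gamma>" using FR_R by blast
    then show ?thesis using z unfolding S_def by (auto simp: face_vals[OF kl])
  qed
  have rho_diag: "((a, a), (c, c)) \<in> \<rho> \<and> ((b, b), (d, d)) \<in> \<rho>" if rr: "((a, b), (c, d)) \<in> \<rho>" for a b c d
  proof -
    obtain \<gamma> where g: "\<gamma> \<in> R" "\<gamma> {} = a" "\<gamma> {l} = b" "\<gamma> {k} = c" "\<gamma> {k, l} = d"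
      using R_rho[OF rr] by blast
    have "refl_cube S l j \<gamma> \<in> R" for j using tol g(1) by (simp add: cube_tolerance_def S_def)
    from rho_R[OF this[of False]] rho_R[OF this[of True]]
    show ?thesis using g unfolding S_def by (simp add: refl_vals[OF kl] face_vals[OF kl])
  qed
  have lemM: "((a, e), (c, f)) \<in> \<rho>" if "((a, b), (c, d)) \<in> \<rho>" "((b, e), (d, f)) \<in> \<rho>" for a b c d e f
    by (rule lemM[OF CM A_in thc rho_sub rho_refl rho_sym rho_trans rho_comp rho_diag that])
  show ?thesis
    unfolding cube_congruence_def
  proof (intro conjI tol ballI)
    fix i assume "i \<in> {k, l}"
    then consider "i = k" | "i = l" by blast
    then show "trans (face_rel {k, l} i R)"
    proof cases
      case 1
      then show ?thesis using eqFR by (simp add: equiv_def FR_def S_def)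
    next
      case 2
      show ?thesis unfolding 2 trans_def
      proof (intro allI impI)
        fix x y z assume xy: "(x, y) \<in> face_rel {k, l} l R" and yz: "(y, z) \<in> face_rel {k, l} l R"
        obtain \<gamma>1 where g1: "\<gamma>1 \<in> R" "x = face {k, l} l False \<gamma>1" "y = face {k, l} l True \<gamma>1"
          using xy by (auto simp: face_rel_def)
        obtain \<gamma>2 where g2: "\<gamma>2 \<in> R" "y = face {k, l} l False \<gamma>2" "z = face {k, l} l True \<gamma>2"
          using yz by (auto simp: face_rel_def)
        have eq1: "\<gamma>1 {l} = \<gamma>2 {}" "\<gamma>1 {k, l} = \<gamma>2 {k}"
          using arg_cong[OF trans[OF g1(3)[symmetric] g2(2)], of "\<lambda>h. h {}"]
            arg_cong[OF trans[OF g1(3)[symmetric] g2(2)], of "\<lambda>h. h {k}"]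
          by (simp_all add: face_vals[OF kl])
        have r1: "((\<gamma>1 {}, \<gamma>1 {l}), (\<gamma>1 {k}, \<gamma>1 {k, l})) \<in> \<rho>" using rho_R g1(1) .
        have r2: "((\<gamma>1 {l}, \<gamma>2 {l}), (\<gamma>1 {k, l}, \<gamma>2 {k, l})) \<in> \<rho>" using rho_R[OF g2(1)] eq1 by simp
        obtain \<gamma>3 where g3: "\<gamma>3 \<in> R" "\<gamma>3 {} = \<gamma>1 {}" "\<gamma>3 {l} = \<gamma>2 {l}" "\<gamma>3 {k} = \<gamma>1 {k}" "\<gamma>3 {k, l} = \<gamma>2 {k, l}"
          using R_rho[OF lemM[OF r1 r2]] by blast
        have "face {k, l} l False \<gamma>3 = x"
          by (rule ext_single[where x = k]) (simp_all add: face_ext[of "{k, l}" l, unfolded diff_l[OF kl]] g1 g3 face_vals[OF kl])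
        moreover have "face {k, l} l True \<gamma>3 = z"
          by (rule ext_single[where x = k]) (simp_all add: face_ext[of "{k, l}" l, unfolded diff_l[OF kl]] g2 g3 face_vals[OF kl])
        ultimately show "(x, z) \<in> face_rel {k, l} l R" using g3(1) unfolding face_rel_def by blast
      qed
    qed
  qed
qed

end
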